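(* Let $b\ge2$ be an integer and let $w=d_1\dots d_p$ be a fixed block of $b$-ary digits with $p\ge1$. Let $v=d_2\dots d_p$. Then $M_w(v,k)=Z_w(v,k)(b^{-1})$, the total mass $\sum b^{-|X|}$ of the strings $X$ with prefix $v$ and exactly $k$ occurrences of $w$, is finite and has the same value for every $k\ge0$.
   Context: Strings are finite sequences over $\{0,\dots,b-1\}$. $|X|$ is the length of $X$. Occurrences of $w$ are counted possibly overlapping. $Z_w(v,k)=\sum_l c_l t^l$, where $c_l$ is the number of strings of length $l$ with prefix $v$ containing exactly $k$ occurrences of $w$. *)

theory Defs
  imports Complex_Main "HOL-Library.Sublist"
begin

definition b_strings :: "nat \<Rightarrow> nat list set" where
  "b_strings b = {X. set X \<subseteq> {..<b}}"

definition occurrences :: "nat list \<Rightarrow> nat list \<Rightarrow> nat" where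
  "occurrences w X = card {i. i + length w \<le> length X \<and> take (length w) (drop i X) = w}"

text \<open>Coefficient c_l of Z_w(v,k): number of b-ary strings of length l with prefix v
  containing exactly k occurrences of w.\<close>
definition Z_coeff :: "nat \<Rightarrow> nat list \<Rightarrow> nat list \<Rightarrow> nat \<Rightarrow> nat \<Rightarrow> nat" where
  "Z_coeff b w v k l = card {X \<in> b_strings b. length X = l \<and> prefix v X \<and> occurrences w X = k}"

end

theory Submission
  imports Defs
begin

lemma suffix_iff_drop:
  "suffix xs ys \<longleftrightarrow> length xs \<le> length ys \<and> drop (length ys - length xs) ys = xs"
proof
  assume "suffix xs ys" then show "length xs \<le> length ys \<and> drop (length ys - length xs) ys = xs"
    by (auto simp: suffix_def)
next
  assume "length xs \<le> length ys \<and> drop (length ys - length xs) ys = xs"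
  then show "suffix xs ys" by (metis suffix_drop)
qed

lemma suffix_append_long:
  "length xs \<le> length ys \<Longrightarrow> suffix xs (U @ ys) \<longleftrightarrow> suffix xs ys"
  by (auto simp: suffix_append suffix_appendI)

lemma occ_snoc:
  assumes "length w \<ge> 1"
  shows "occurrences w (X @ [c]) = occurrences w X + (if suffix w (X @ [c]) then 1 else 0)"
proof -
  let ?p = "length w"
  let ?A = "{i. i + ?p \<le> length X \<and> take ?p (drop i X) = w}"
  have eq: "{i. i + ?p \<le> length (X@[c]) \<and> take ?p (drop i (X@[c])) = w}
      = ?A \<union> (if suffix w (X @ [c]) then {length X + 1 - ?p} else {})"
  proof (rule set_eqI)
    fix i
    show "i \<in> {i. i + ?p \<le> length (X@[c]) \<and> take ?p (drop i (X@[c])) = w} \<longleftrightarrow>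
       i \<in> ?A \<union> (if suffix w (X @ [c]) then {length X + 1 - ?p} else {})"
    proof (cases "i + ?p \<le> length X")
      case True
      then show ?thesis using assms by (auto simp: take_append)
    next
      case False
      then show ?thesis using assms
        by (auto simp: suffix_iff_drop)
    qed
  qed
  have fin: "finite ?A" by (rule finite_subset[of _ "{..length X}"]) auto
  have "length X + 1 - ?p \<notin> ?A" using assms by auto
  then show ?thesis unfolding occurrences_def eq using fin by auto
qed

lemma occ_short: "length X < length w \<Longrightarrow> occurrences w X = 0"
  unfolding occurrences_def by auto

lemma occ_suffix_pos:
  assumes "suffix w X" shows "occurrences w X \<ge> 1"
proof -
  have "finite {i. i + length w \<le> length X \<and> take (length w) (drop i X) = w}"
    by (rule finite_subset[of _ "{..length X}"]) auto
  moreover have "length X - length w \<in> {i. i + length w \<le> length X \<and> take (length w) (drop i X) = w}"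
    using assms by (auto simp: suffix_iff_drop)
  ultimately show ?thesis unfolding occurrences_def
    by (metis One_nat_def Suc_leI card_gt_0_iff empty_iff)
qed

lemma occ_mono:
  assumes "length w \<ge> 1" shows "occurrences w X \<le> occurrences w (X @ Z)"
proof (induction Z rule: rev_induct)
  case Nil then show ?case by simp
next
  case (snoc c Z)
  then show ?case using occ_snoc[OF assms, of "X @ Z" c] by simp
qed

lemma occ_split:
  assumes "length v + 1 = length w" and "suffix v S"
  shows "occurrences w (S @ Z) = occurrences w S + occurrences w (v @ Z)"
proof (induction Z rule: rev_induct)
  case Nil then show ?case using occ_short[of v w] assms by simp
next
  case (snoc c Z)
  obtain U where S: "S = U @ v" using assms(2) by (auto simp: suffix_def)
  have "suffix w (S @ Z @ [c]) \<longleftrightarrow> suffix w (v @ Z @ [c])"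
    unfolding S using suffix_append_long[of w "v @ Z @ [c]" U] assms(1) by simp
  then show ?case using occ_snoc[of w "S @ Z" c] occ_snoc[of w "v @ Z" c] snoc assms(1)
    by simp
qed


definition AA :: "nat \<Rightarrow> nat list \<Rightarrow> nat \<Rightarrow> nat \<Rightarrow> nat list set" where
  "AA b w k n = {Y. set Y \<subseteq> {..<b} \<and> length Y = n \<and> occurrences w (tl w @ Y) = k}"

definition FF :: "nat \<Rightarrow> nat list \<Rightarrow> nat \<Rightarrow> nat list set" where
  "FF b w m = {Y. set Y \<subseteq> {..<b} \<and> length Y = m \<and> occurrences w (tl w @ Y) = 1 \<and> suffix w (tl w @ Y)}"

lemma finite_AA: "finite (AA b w k n)"
  by (rule finite_subset[OF _ finite_lists_length_eq[OF finite_lessThan[of b], of n]])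
     (auto simp: AA_def)

lemma finite_FF: "finite (FF b w m)"
  by (rule finite_subset[OF _ finite_lists_length_eq[OF finite_lessThan[of b], of m]])
     (auto simp: FF_def)

lemma len_tl: "length w \<ge> 1 \<Longrightarrow> length (tl w) + 1 = length w" by simp

lemma exists_first:
  assumes w1: "length w \<ge> 1"
  shows "set Y \<subseteq> {..<b} \<Longrightarrow> occurrences w (tl w @ Y) \<ge> 1 \<Longrightarrow> \<exists>m \<le> length Y. take m Y \<in> FF b w m"
proof (induction Y rule: rev_induct)
  case Nil then show ?case using occ_short[of "tl w" w] w1 by simp
next
  case (snoc c Y)
  show ?case
  proof (cases "occurrences w (tl w @ Y) \<ge> 1")
    case True
    then obtain m where "m \<le> length Y" "take m Y \<in> FF b w m" using snoc by auto
    then show ?thesis by (intro exI[of _ m]) auto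
  next
    case False
    then have "occurrences w (tl w @ Y) = 0" by simp
    then show ?thesis using snoc.prems occ_snoc[OF w1, of "tl w @ Y" c]
      by (intro exI[of _ "length (Y @ [c])"]) (auto simp: FF_def split: if_splits)
  qed
qed

lemma FF_prefix_unique:
  assumes w1: "length w \<ge> 1"
    and Y1: "Y1 \<in> FF b w m" and Y2: "Y2 \<in> FF b w m'" and pre: "prefix Y1 Y2"
  shows "m = m'"
proof (rule ccontr)
  assume ne: "m \<noteq> m'"
  obtain D where D: "Y2 = Y1 @ D" using pre by (auto simp: prefix_def)
  have "length Y1 = m" "length Y2 = m'" using Y1 Y2 by (auto simp: FF_def)
  then have Dne: "length D \<ge> 1" using D ne by (cases D) auto
  have sv: "suffix (tl w) (tl w @ Y1)"
    using Y1 unfolding FF_def by (metis (mono_tags, lifting) mem_Collect_eq suffix_order.trans suffix_tl)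
  have split: "occurrences w (tl w @ Y2) = occurrences w (tl w @ Y1) + occurrences w (tl w @ D)"
    using occ_split[OF len_tl[OF w1] sv, of D] D by simp
  obtain U where U: "tl w @ Y1 = U @ tl w" using sv by (auto simp: suffix_def)
  have "suffix w (U @ (tl w @ D))" using Y2 D U by (simp add: FF_def flip: append_assoc)
  then have "suffix w (tl w @ D)"
    using suffix_append_long[of w "tl w @ D" U] Dne w1 by simp
  then have "occurrences w (tl w @ D) \<ge> 1" by (rule occ_suffix_pos)
  then show False using split Y1 Y2 by (simp add: FF_def)
qed

lemma card_AA_Suc:
  assumes w1: "length w \<ge> 1"
  shows "card (AA b w (Suc k) n) = (\<Sum>m\<le>n. card (FF b w m) * card (AA b w k (n - m)))"
proof -
  let ?S = "SIGMA m:{..n}. FF b w m \<times> AA b w k (n - m)"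
  let ?f = "\<lambda>(m, Y1, Z). Y1 @ Z"
  have img: "?f ` ?S = AA b w (Suc k) n"
  proof
    show "?f ` ?S \<subseteq> AA b w (Suc k) n"
    proof clarsimp
      fix m Y1 Z assume m: "m \<le> n" and Y1: "Y1 \<in> FF b w m" and Z: "Z \<in> AA b w k (n - m)"
      have sv: "suffix (tl w) (tl w @ Y1)"
        using Y1 unfolding FF_def by (metis (mono_tags, lifting) mem_Collect_eq suffix_order.trans suffix_tl)
      have "occurrences w ((tl w @ Y1) @ Z) = occurrences w (tl w @ Y1) + occurrences w (tl w @ Z)"
        by (rule occ_split[OF len_tl[OF w1] sv])
      then show "Y1 @ Z \<in> AA b w (Suc k) n" using m Y1 Z by (auto simp: AA_def FF_def)
    qed
  next
    show "AA b w (Suc k) n \<subseteq> ?f ` ?S"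
    proof
      fix Y assume Y: "Y \<in> AA b w (Suc k) n"
      then obtain m where m: "m \<le> length Y" "take m Y \<in> FF b w m"
        using exists_first[OF w1, of Y b] by (auto simp: AA_def)
      have sv: "suffix (tl w) (tl w @ take m Y)"
        using m(2) unfolding FF_def by (metis (mono_tags, lifting) mem_Collect_eq suffix_order.trans suffix_tl)
      have "occurrences w ((tl w @ take m Y) @ drop m Y) = occurrences w (tl w @ take m Y) + occurrences w (tl w @ drop m Y)"
        by (rule occ_split[OF len_tl[OF w1] sv])
      then have "drop m Y \<in> AA b w k (n - m)" using Y m
        by (auto simp: AA_def FF_def dest: in_set_dropD)
      then have "(m, take m Y, drop m Y) \<in> ?S" using m Y by (auto simp: AA_def)
      then show "Y \<in> ?f ` ?S" by (intro image_eqI[of _ _ "(m, take m Y, drop m Y)"]) auto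
    qed
  qed
  have inj: "inj_on ?f ?S"
  proof (rule inj_onI, clarsimp)
    fix m Y1 Z m' Y1' Z'
    assume a: "m \<le> n" "Y1 \<in> FF b w m" "Z \<in> AA b w k (n - m)" "m' \<le> n" "Y1' \<in> FF b w m'"
      "Z' \<in> AA b w k (n - m')" "Y1 @ Z = Y1' @ Z'"
    have "prefix Y1 Y1' \<or> prefix Y1' Y1"
      using prefix_same_cases[of Y1 "Y1' @ Z'" Y1'] a(7) by (metis prefix_append prefix_order.refl)
    then have mm: "m = m'" using FF_prefix_unique[OF w1] a by metis
    then have "length Y1 = length Y1'" using a by (simp add: FF_def)
    then show "m = m' \<and> Y1 = Y1' \<and> Z = Z'" using mm a(7) by simp
  qed
  have "card (AA b w (Suc k) n) = card ?S" using img card_image[OF inj] by simp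
  also have "\<dots> = (\<Sum>m\<le>n. card (FF b w m \<times> AA b w k (n - m)))"
    by (rule card_SigmaI) (auto intro: finite_AA finite_FF)
  also have "\<dots> = (\<Sum>m\<le>n. card (FF b w m) * card (AA b w k (n - m)))"
    by (simp add: card_cartesian_product)
  finally show ?thesis .
qed


lemma AA0_0: "length w \<ge> 1 \<Longrightarrow> AA b w 0 0 = {[]}"
  using occ_short[of "tl w" w] by (auto simp: AA_def)

lemma FF_0: "length w \<ge> 1 \<Longrightarrow> FF b w 0 = {}"
  using occ_short[of "tl w" w] by (auto simp: FF_def)

lemma card_AA_le: "card (AA b w k n) \<le> b ^ n"
proof -
  have "card (AA b w k n) \<le> card {xs. set xs \<subseteq> {..<b} \<and> length xs = n}"
    by (rule card_mono[OF finite_lists_length_eq]) (auto simp: AA_def)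
  then show ?thesis by (simp add: card_lists_length_eq)
qed

lemma card_rec:
  assumes w1: "length w \<ge> 1"
  shows "card (FF b w (Suc m)) + card (AA b w 0 (Suc m)) = b * card (AA b w 0 m)"
proof -
  let ?g = "\<lambda>(Y, c). Y @ [c]"
  have img: "?g ` (AA b w 0 m \<times> {..<b}) = FF b w (Suc m) \<union> AA b w 0 (Suc m)"
  proof
    show "?g ` (AA b w 0 m \<times> {..<b}) \<subseteq> FF b w (Suc m) \<union> AA b w 0 (Suc m)"
    proof clarsimp
      fix Y c assume "Y \<in> AA b w 0 m" "c < b" "Y @ [c] \<notin> AA b w 0 (Suc m)"
      then show "Y @ [c] \<in> FF b w (Suc m)"
        using occ_snoc[OF w1, of "tl w @ Y" c] by (auto simp: AA_def FF_def split: if_splits)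
    qed
  next
    show "FF b w (Suc m) \<union> AA b w 0 (Suc m) \<subseteq> ?g ` (AA b w 0 m \<times> {..<b})"
    proof
      fix Y assume Y: "Y \<in> FF b w (Suc m) \<union> AA b w 0 (Suc m)"
      then have "Y \<noteq> []" by (auto simp: AA_def FF_def)
      then have Yd: "Y = butlast Y @ [last Y]" by simp
      have o: "occurrences w (tl w @ Y) = occurrences w (tl w @ butlast Y) + (if suffix w (tl w @ Y) then 1 else 0)"
        using occ_snoc[OF w1, of "tl w @ butlast Y" "last Y"] Yd by (metis append_assoc)
      have "set Y \<subseteq> {..<b}" "length Y = Suc m" using Y by (auto simp: AA_def FF_def)
      then have "last Y < b" "set (butlast Y) \<subseteq> {..<b}" using \<open>Y \<noteq> []\<close>
        by (auto dest: in_set_butlastD) (use last_in_set in blast)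
      moreover have "butlast Y \<in> AA b w 0 m"
        using Y o \<open>set (butlast Y) \<subseteq> {..<b}\<close> by (auto simp: AA_def FF_def split: if_splits)
      ultimately show "Y \<in> ?g ` (AA b w 0 m \<times> {..<b})"
        using Yd by (intro image_eqI[of _ _ "(butlast Y, last Y)"]) auto
    qed
  qed
  have inj: "inj_on ?g (AA b w 0 m \<times> {..<b})" by (auto intro: inj_onI)
  have disj: "FF b w (Suc m) \<inter> AA b w 0 (Suc m) = {}" by (auto simp: AA_def FF_def)
  have "card (FF b w (Suc m)) + card (AA b w 0 (Suc m)) = card (FF b w (Suc m) \<union> AA b w 0 (Suc m))"
    using disj by (simp add: card_Un_disjoint finite_AA finite_FF)
  also have "\<dots> = card (AA b w 0 m \<times> {..<b})" using card_image[OF inj] img by simp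
  finally show ?thesis by (simp add: card_cartesian_product)
qed

lemma card_bound:
  assumes w1: "length w \<ge> 1" and ws: "set w \<subseteq> {..<b}"
  shows "card (AA b w 0 (n + length w)) \<le> card (AA b w 0 n) * (b ^ length w - 1)"
proof -
  let ?L = "{xs. set xs \<subseteq> {..<b} \<and> length xs = length w} - {w}"
  let ?h = "\<lambda>Y. (take n Y, drop n Y)"
  have inj: "inj_on ?h (AA b w 0 (n + length w))"
    by (rule inj_onI) (metis append_take_drop_id prod.inject)
  have sub: "?h ` AA b w 0 (n + length w) \<subseteq> AA b w 0 n \<times> ?L"
  proof clarsimp
    fix Y assume Y: "Y \<in> AA b w 0 (n + length w)"
    have "occurrences w (tl w @ take n Y) \<le> occurrences w ((tl w @ take n Y) @ drop n Y)"
      by (rule occ_mono[OF w1])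
    then have "take n Y \<in> AA b w 0 n" using Y
      by (auto simp: AA_def dest: in_set_takeD)
    moreover have "drop n Y \<noteq> w"
    proof
      assume "drop n Y = w"
      then have "suffix w (tl w @ Y)" by (metis suffix_appendI suffix_drop)
      then show False using occ_suffix_pos[of w "tl w @ Y"] Y by (simp add: AA_def)
    qed
    moreover have "set (drop n Y) \<subseteq> {..<b}" using Y by (auto simp: AA_def dest: in_set_dropD)
    ultimately show "take n Y \<in> AA b w 0 n \<and> set (drop n Y) \<subseteq> {..<b} \<and> length Y - n = length w \<and> drop n Y \<noteq> w"
      using Y by (auto simp: AA_def)
  qed
  have "card (AA b w 0 (n + length w)) \<le> card (AA b w 0 n \<times> ?L)"
    by (rule card_inj_on_le[OF inj sub]) (simp add: finite_AA finite_lists_length_eq)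
  also have "\<dots> = card (AA b w 0 n) * (b ^ length w - 1)"
    using ws by (simp add: card_cartesian_product card_lists_length_eq finite_lists_length_eq)
  finally show ?thesis .
qed


context
  fixes b :: nat and w :: "nat list"
  assumes b2: "b \<ge> 2" and w1: "length w \<ge> 1" and ws: "set w \<subseteq> {..<b}"
begin

definition "rr = 1 / real b"
definition "xx n = real (card (AA b w 0 n)) * rr ^ n"
definition "yy m = real (card (FF b w m)) * rr ^ m"
definition "zz k n = real (card (AA b w k n)) * rr ^ n"
definition "qq = 1 - rr ^ length w"

lemma rr_pos: "0 < rr" "rr < 1" using b2 by (auto simp: rr_def)

lemma brr_pow: "real b ^ n * rr ^ n = 1"
proof -
  have "real b * rr = 1" using b2 by (simp add: rr_def)
  then show ?thesis by (metis power_mult_distrib power_one)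
qed

lemma wpos: "0 < length w" using w1 by linarith

lemma qq_bounds: "0 < qq" "qq < 1"
proof -
  have "rr ^ length w < 1" using rr_pos wpos by (simp add: power_less_one_iff)
  moreover have "0 < rr ^ length w" using rr_pos by simp
  ultimately show "0 < qq" "qq < 1" by (auto simp: qq_def)
qed

lemma xx_nonneg: "0 \<le> xx n" using rr_pos by (simp add: xx_def)
lemma yy_nonneg: "0 \<le> yy n" using rr_pos by (simp add: yy_def)
lemma zz_nonneg: "0 \<le> zz k n" using rr_pos by (simp add: zz_def)

lemma xx_le1: "xx n \<le> 1"
proof -
  have "real (card (AA b w 0 n)) \<le> real b ^ n" using card_AA_le[of b w 0 n]
    by (simp only: of_nat_le_iff flip: of_nat_power)
  then have "real (card (AA b w 0 n)) * rr ^ n \<le> real b ^ n * rr ^ n"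
    using rr_pos by (simp add: mult_right_mono)
  also have "\<dots> = 1" by (rule brr_pow)
  finally show ?thesis by (simp add: xx_def)
qed

lemma xx_step: "xx (n + length w) \<le> qq * xx n"
proof -
  let ?p = "length w"
  have bp: "1 \<le> b ^ ?p" using b2 by simp
  have "real (card (AA b w 0 (n + ?p))) \<le> real (card (AA b w 0 n)) * (real b ^ ?p - 1)"
    using card_bound[OF w1 ws, of n] bp
  proof -
    have "real (card (AA b w 0 (n + ?p))) \<le> real (card (AA b w 0 n) * (b ^ ?p - 1))"
      using card_bound[OF w1 ws, of n] by (simp only: of_nat_le_iff)
    also have "\<dots> = real (card (AA b w 0 n)) * (real b ^ ?p - 1)"
      using bp by (simp add: of_nat_diff)
    finally show ?thesis .
  qed
  then have "xx (n + ?p) \<le> real (card (AA b w 0 n)) * (real b ^ ?p - 1) * rr ^ (n + ?p)"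
    unfolding xx_def using rr_pos by (simp add: mult_right_mono)
  also have "\<dots> = xx n * ((real b ^ ?p - 1) * rr ^ ?p)" by (simp add: xx_def power_add)
  also have "(real b ^ ?p - 1) * rr ^ ?p = qq"
    using brr_pow[of ?p] by (simp add: qq_def left_diff_distrib)
  finally show ?thesis by (simp add: mult.commute)
qed

lemma xx_pow: "xx (j + length w * t) \<le> qq ^ t"
proof (induction t)
  case 0 then show ?case using xx_le1 by simp
next
  case (Suc t)
  have "xx (j + length w * Suc t) = xx ((j + length w * t) + length w)" by (simp add: algebra_simps)
  also have "\<dots> \<le> qq * xx (j + length w * t)" by (rule xx_step)
  also have "\<dots> \<le> qq * qq ^ t" using Suc qq_bounds by (simp add: mult_left_mono)
  finally show ?case by simp
qed

lemma xx_summable: "summable xx"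
proof -
  let ?p = "length w"
  define s where "s = root ?p qq"
  have sp: "s ^ ?p = qq" using qq_bounds wpos unfolding s_def by (intro real_root_pow_pos2) auto
  have s0: "0 \<le> s" "s < 1" using qq_bounds wpos unfolding s_def
    by (auto intro: real_root_ge_zero)
  have bnd: "xx n \<le> s ^ n / qq" for n
  proof -
    have "xx n \<le> qq ^ (n div ?p)" using xx_pow[of "n mod ?p" "n div ?p"] by simp
    also have "qq ^ (n div ?p) = s ^ (?p * (n div ?p + 1)) / qq"
    proof -
      have "s ^ (?p * (n div ?p + 1)) = qq ^ (n div ?p + 1)" unfolding power_mult sp ..
      then show ?thesis using qq_bounds by simp
    qed
    also have "\<dots> \<le> s ^ n / qq"
    proof -
      have "n mod ?p < ?p" using wpos by simp
      moreover have "?p * (n div ?p) + n mod ?p = n" by (rule mult_div_mod_eq)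
      ultimately have "n \<le> ?p * (n div ?p + 1)" unfolding distrib_left by linarith
      then have "s ^ (?p * (n div ?p + 1)) \<le> s ^ n" using s0 by (simp add: power_decreasing)
      then show ?thesis using qq_bounds by (simp add: divide_right_mono)
    qed
    finally show ?thesis .
  qed
  show ?thesis
    by (rule summable_comparison_test[of _ "\<lambda>n. s ^ n / qq"])
       (use bnd xx_nonneg s0 in \<open>auto intro!: summable_divide summable_geometric\<close>)
qed

lemma yy_partial: "(\<Sum>m\<le>N. yy m) = 1 - xx N"
proof (induction N)
  case 0 then show ?case using FF_0[OF w1] AA0_0[OF w1] by (simp add: yy_def xx_def)
next
  case (Suc N)
  have "real (card (FF b w (Suc N))) + real (card (AA b w 0 (Suc N))) = real b * real (card (AA b w 0 N))"
    using card_rec[OF w1, of b N] by (simp only: flip: of_nat_add of_nat_mult)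
  then have "yy (Suc N) + xx (Suc N) = xx N"
  proof -
    have "yy (Suc N) + xx (Suc N) = (real (card (FF b w (Suc N))) + real (card (AA b w 0 (Suc N)))) * rr ^ Suc N"
      unfolding xx_def yy_def by (simp add: distrib_right)
    also have "\<dots> = real (card (AA b w 0 N)) * rr ^ N * (real b * rr)"
      unfolding \<open>real (card (FF b w (Suc N))) + real (card (AA b w 0 (Suc N))) = real b * real (card (AA b w 0 N))\<close>
      by (simp add: algebra_simps)
    also have "real b * rr = 1" using brr_pow[of 1] by simp
    finally show ?thesis by (simp add: xx_def)
  qed
  then show ?case using Suc by simp
qed

lemma yy_sums: "yy sums 1"
proof -
  have "xx \<longlonglongrightarrow> 0" by (rule summable_LIMSEQ_zero[OF xx_summable])
  then have "(\<lambda>N. 1 - xx N) \<longlonglongrightarrow> 1 - 0" by (intro tendsto_intros)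
  then have "(\<lambda>N. \<Sum>m<Suc N. yy m) \<longlonglongrightarrow> 1" using yy_partial by (simp add: lessThan_Suc_atMost)
  then show ?thesis unfolding sums_def by (subst (asm) filterlim_sequentially_Suc)
qed

lemma zz_conv: "zz (Suc k) n = (\<Sum>m\<le>n. yy m * zz k (n - m))"
proof -
  have "zz (Suc k) n = (\<Sum>m\<le>n. real (card (FF b w m) * card (AA b w k (n - m)))) * rr ^ n"
    unfolding zz_def card_AA_Suc[OF w1] by simp
  also have "\<dots> = (\<Sum>m\<le>n. yy m * zz k (n - m))"
    unfolding sum_distrib_right yy_def zz_def
    by (intro sum.cong refl) (simp add: power_add[symmetric])
  finally show ?thesis .
qed

lemma zz_sums: "zz k sums (\<Sum>n. xx n)"
proof (induction k)
  case 0
  have "zz 0 = xx" by (auto simp: zz_def xx_def)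
  then show ?case using xx_summable by (simp add: summable_sums)
next
  case (Suc k)
  have "(\<lambda>n. \<Sum>m\<le>n. yy m * zz k (n - m)) sums ((\<Sum>n. yy n) * (\<Sum>n. zz k n))"
    by (rule Cauchy_product_sums)
       (use yy_sums Suc yy_nonneg zz_nonneg in \<open>auto simp: sums_iff\<close>)
  then show ?case using yy_sums Suc zz_conv by (simp add: sums_iff)
qed

end

lemma Z_coeff_eq:
  assumes ws: "set w \<subseteq> {..<b}"
  shows "Z_coeff b w (tl w) k l = (if length (tl w) \<le> l then card (AA b w k (l - length (tl w))) else 0)"
proof -
  let ?v = "tl w"
  have sv: "set ?v \<subseteq> {..<b}" using ws by (cases w) auto
  show ?thesis
  proof (cases "length ?v \<le> l")
    case True
    have "{X \<in> b_strings b. length X = l \<and> prefix ?v X \<and> occurrences w X = k} = (\<lambda>Y. ?v @ Y) ` AA b w k (l - length ?v)"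
    proof
      show "{X \<in> b_strings b. length X = l \<and> prefix ?v X \<and> occurrences w X = k} \<subseteq> (\<lambda>Y. ?v @ Y) ` AA b w k (l - length ?v)"
      proof
        fix X assume "X \<in> {X \<in> b_strings b. length X = l \<and> prefix ?v X \<and> occurrences w X = k}"
        then have X: "X \<in> b_strings b" "length X = l" "prefix ?v X" "occurrences w X = k" by auto
        then obtain Y where Y: "X = ?v @ Y" by (auto simp: prefix_def)
        then have "Y \<in> AA b w k (l - length ?v)" using X by (auto simp: AA_def b_strings_def)
        then show "X \<in> (\<lambda>Y. ?v @ Y) ` AA b w k (l - length ?v)" using Y by blast
      qed
    next
      show "(\<lambda>Y. ?v @ Y) ` AA b w k (l - length ?v) \<subseteq> {X \<in> b_strings b. length X = l \<and> prefix ?v X \<and> occurrences w X = k}"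
        using True sv by (auto simp: AA_def b_strings_def)
    qed
    moreover have "inj_on (\<lambda>Y. ?v @ Y) (AA b w k (l - length ?v))" by (rule inj_onI) simp
    ultimately show ?thesis using True unfolding Z_coeff_def by (simp add: card_image)
  next
    case False
    then have e: "{X \<in> b_strings b. length X = l \<and> prefix ?v X \<and> occurrences w X = k} = {}"
      by (auto dest: prefix_length_le)
    show ?thesis using False unfolding Z_coeff_def e by simp
  qed
qed

theorem lemma4:
  fixes b :: nat and w :: "nat list"
  assumes "b \<ge> 2" and "length w \<ge> 1" and "set w \<subseteq> {..<b}"
  shows "\<exists>M::real. \<forall>k::nat.
           (\<lambda>l. real (Z_coeff b w (tl w) k l) * (1 / real b) ^ l) sums M"
proof (intro exI allI)
  fix k
  let ?P = "length (tl w)"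
  let ?t = "\<lambda>l. real (Z_coeff b w (tl w) k l) * (1 / real b) ^ l"
  have "(\<lambda>i. zz b w k i * (1 / real b) ^ ?P) sums (suminf (xx b w) * (1 / real b) ^ ?P)"
    by (rule sums_mult2[OF zz_sums[OF assms]])
  moreover have "(\<lambda>i. ?t (i + ?P)) = (\<lambda>i. zz b w k i * (1 / real b) ^ ?P)"
    using Z_coeff_eq[OF assms(3)] by (auto simp: zz_def[OF assms] rr_def[OF assms] power_add)
  ultimately have A: "(\<lambda>i. ?t (i + ?P)) sums (suminf (xx b w) * (1 / real b) ^ ?P)" by simp
  have z: "(\<Sum>i<?P. ?t i) = 0" using Z_coeff_eq[OF assms(3)] by simp
  have "?t sums (suminf (xx b w) * (1 / real b) ^ ?P + (\<Sum>i<?P. ?t i))"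
    using A sums_iff_shift[of ?t ?P] by blast
  then show "?t sums (suminf (xx b w) * (1 / real b) ^ ?P)" unfolding z by simp
qed

end
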